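(* Fix $\mu,\nu,\delta>0$ and $\beta\in\mathbb{R}$. For $n\in\mathbb{N}_+$ set $\beta_n=\beta/n$ and $\varepsilon_n=n+\delta/n$, and let $f^*_{\varepsilon_n,\beta_n}$ be the map $f_{\varepsilon_n}$ (with parameters $\mu,\nu,\beta_n$) written in the scaled coordinates $(\xi,\eta,\zeta)$ around any of $P_\pm,Q_\pm$ (as defined in the context). Then there is a ball around the origin on which $f^*_{\varepsilon_n,\beta_n}$ converges, as $n\to\infty$ (uniformly, together with its Taylor expansion), to the quadratic map $\xi'=\xi+2\pi\mu\eta$, $\eta'=\eta+2\pi\nu\zeta'$, $\zeta'=\zeta+\delta-2\pi^2\xi^2-2\pi\sigma\beta\eta$ (with $\sigma=+1$ for $P_\pm$, $\sigma=-1$ for $Q_\pm$), which is linearly conjugate to $M_{\varphi,a}$ in the case of $P_\pm$ and to $M_{\varphi,-a}$ in the case of $Q_\pm$, where $\varphi=\pi(32\mu^2\nu^2\delta)^{1/6}$ and $a=\beta\left(\frac{2\nu}{\delta\mu^2}\right)^{1/3}$.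
   Context: Let $\psi:\mathbb{R}\to\mathbb{R}$ be a real-analytic degree-one circle map ($\psi(z+1)=\psi(z)+1$) with $\psi(z)-z$ odd and period-one and $\psi(0)=\psi'(0)=0$. For parameters $\varepsilon,\mu,\nu,\beta$, $f_\varepsilon:\mathbb{T}^2\times\mathbb{R}\to\mathbb{T}^2\times\mathbb{R}$ is $z'=z+\varepsilon(\cos(2\pi x)-\beta\sin(2\pi y))$, $y'=y+\nu\sin(2\pi z')$, $x'=x+\mu\sin(2\pi y)+\psi(z')$ ($x,y$ mod 1). The points $P_+=(0,0,0)$, $P_-=(\tfrac12,0,0)$, $Q_+=(0,\tfrac12,0)$, $Q_-=(\tfrac12,\tfrac12,0)$ are fixed point accelerator modes at $\varepsilon=n$, with $z$-jumps $+n$ ($P_+,Q_+$) and $-n$ ($P_-,Q_-$). The scaled coordinates are $(\xi,\eta,\zeta)=n(x,y,z)$ near $P_+$, $n(\tfrac12-x,-y,-z)$ near $P_-$, $n(-x,y-\tfrac12,z)$ near $Q_+$, $n(x-\tfrac12,\tfrac12-y,-z)$ near $Q_-$, and in these coordinates the integer $z$-jump of the accelerator mode is removed. The Michelson map $M_{\varphi,a}$ is $(u,v,w)\mapsto(u',v',w')$ with $w'=w+\varphi(1-u^2-av)$, $v'=v+\varphi w'$, $u'=u+\varphi v$. *)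

theory Defs
  imports "HOL-Analysis.Analysis"
begin

definition real_analytic :: "(real \<Rightarrow> real) \<Rightarrow> bool" where
  "real_analytic g \<longleftrightarrow>
     (\<forall>x. \<exists>r>0. \<exists>c::nat \<Rightarrow> real. \<forall>y\<in>ball x r. (\<lambda>k. c k * (y - x) ^ k) sums g y)"

text \<open>Lift of the map f_eps to R^3 (x,y not reduced mod 1).\<close>
definition lift_f :: "(real \<Rightarrow> real) \<Rightarrow> real \<Rightarrow> real \<Rightarrow> real \<Rightarrow> real
    \<Rightarrow> real \<times> real \<times> real \<Rightarrow> real \<times> real \<times> real" where
  "lift_f \<psi> \<epsilon> \<mu> \<nu> \<beta> = (\<lambda>(x, y, z).
     let z' = z + \<epsilon> * (cos (2 * pi * x) - \<beta> * sin (2 * pi * y));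
         y' = y + \<nu> * sin (2 * pi * z');
         x' = x + \<mu> * sin (2 * pi * y) + \<psi> z'
     in (x', y', z'))"

datatype accpt = Pplus | Pminus | Qplus | Qminus

fun base_pt :: "accpt \<Rightarrow> real \<times> real \<times> real" where
  "base_pt Pplus = (0, 0, 0)"
| "base_pt Pminus = (1/2, 0, 0)"
| "base_pt Qplus = (0, 1/2, 0)"
| "base_pt Qminus = (1/2, 1/2, 0)"

fun chart_sgn :: "accpt \<Rightarrow> real \<times> real \<times> real" where
  "chart_sgn Pplus = (1, 1, 1)"
| "chart_sgn Pminus = (-1, -1, -1)"
| "chart_sgn Qplus = (-1, 1, 1)"
| "chart_sgn Qminus = (1, -1, -1)"

text \<open>Sign of the integer jump (+n for P+,Q+; -n for P-,Q-).\<close>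
fun jump_sgn :: "accpt \<Rightarrow> real" where
  "jump_sgn Pplus = 1"
| "jump_sgn Pminus = -1"
| "jump_sgn Qplus = 1"
| "jump_sgn Qminus = -1"

fun sigma_pt :: "accpt \<Rightarrow> real" where
  "sigma_pt Pplus = 1"
| "sigma_pt Pminus = 1"
| "sigma_pt Qplus = -1"
| "sigma_pt Qminus = -1"

definition to_scaled :: "real \<Rightarrow> accpt \<Rightarrow> real \<times> real \<times> real \<Rightarrow> real \<times> real \<times> real" where
  "to_scaled n p = (\<lambda>(x, y, z). case base_pt p of (px, py, pz) \<Rightarrow> case chart_sgn p of (sx, sy, sz) \<Rightarrow>
      (n * sx * (x - px), n * sy * (y - py), n * sz * (z - pz)))"

definition from_scaled :: "real \<Rightarrow> accpt \<Rightarrow> real \<times> real \<times> real \<Rightarrow> real \<times> real \<times> real" where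
  "from_scaled n p = (\<lambda>(\<xi>, \<eta>, \<zeta>). case base_pt p of (px, py, pz) \<Rightarrow> case chart_sgn p of (sx, sy, sz) \<Rightarrow>
      (px + sx * \<xi> / n, py + sy * \<eta> / n, pz + sz * \<zeta> / n))"

text \<open>f^*_{eps_n,beta_n} in scaled coordinates around p, with eps_n = n + delta/n, beta_n = beta/n,
  the integer jump (x and z both jump by the same integer +-n; the x-jump is invisible on the torus)
  removed.\<close>
definition fstar :: "(real \<Rightarrow> real) \<Rightarrow> real \<Rightarrow> real \<Rightarrow> real \<Rightarrow> real \<Rightarrow> accpt \<Rightarrow> nat
    \<Rightarrow> real \<times> real \<times> real \<Rightarrow> real \<times> real \<times> real" where
  "fstar \<psi> \<mu> \<nu> \<delta> \<beta> p n X =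
     (let m = real n; j = jump_sgn p * m in
      to_scaled m p (lift_f \<psi> (m + \<delta> / m) \<mu> \<nu> (\<beta> / m) (from_scaled m p X) - (j, 0, j)))"

definition quad_map :: "real \<Rightarrow> real \<Rightarrow> real \<Rightarrow> real \<Rightarrow> real
    \<Rightarrow> real \<times> real \<times> real \<Rightarrow> real \<times> real \<times> real" where
  "quad_map \<mu> \<nu> \<delta> \<beta> \<sigma> = (\<lambda>(\<xi>, \<eta>, \<zeta>).
     let \<zeta>' = \<zeta> + \<delta> - 2 * pi\<^sup>2 * \<xi>\<^sup>2 - 2 * pi * \<sigma> * \<beta> * \<eta>;
         \<eta>' = \<eta> + 2 * pi * \<nu> * \<zeta>';
         \<xi>' = \<xi> + 2 * pi * \<mu> * \<eta>
     in (\<xi>', \<eta>', \<zeta>'))"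

definition michelson :: "real \<Rightarrow> real \<Rightarrow> real \<times> real \<times> real \<Rightarrow> real \<times> real \<times> real" where
  "michelson \<phi> a = (\<lambda>(u, v, w).
     let w' = w + \<phi> * (1 - u\<^sup>2 - a * v);
         v' = v + \<phi> * w';
         u' = u + \<phi> * v
     in (u', v', w'))"

fun iter_dderiv :: "'a list \<Rightarrow> ('a::real_normed_vector \<Rightarrow> 'b::real_normed_vector) \<Rightarrow> 'a \<Rightarrow> 'b" where
  "iter_dderiv [] g = g"
| "iter_dderiv (v # vs) g = (\<lambda>x. frechet_derivative (iter_dderiv vs g) (at x) v)"

end

theory Submission
  imports Defs
begin


definition smooth_fam :: "(nat \<Rightarrow> real \<Rightarrow> real) \<Rightarrow> bool" where
  "smooth_fam \<Phi> \<longleftrightarrow> (\<forall>k y. (\<Phi> k has_real_derivative \<Phi> (Suc k) y) (at y))"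

inductive_set gen :: "((nat \<Rightarrow> 'a::real_normed_vector \<Rightarrow> real) \<times> ('a \<Rightarrow> real)) set" where
  lin: "bounded_linear l \<Longrightarrow> (\<lambda>n. l, l) \<in> gen"
| const: "c \<longlonglongrightarrow> L \<Longrightarrow> (\<lambda>n x. c n, \<lambda>x. L) \<in> gen"
| add: "(fs, f) \<in> gen \<Longrightarrow> (gs, g) \<in> gen \<Longrightarrow> (\<lambda>n x. fs n x + gs n x, \<lambda>x. f x + g x) \<in> gen"
| mult: "(fs, f) \<in> gen \<Longrightarrow> (gs, g) \<in> gen \<Longrightarrow> (\<lambda>n x. fs n x * gs n x, \<lambda>x. f x * g x) \<in> gen"
| comp0: "smooth_fam \<Phi> \<Longrightarrow> (as, a) \<in> gen \<Longrightarrow>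
     (\<lambda>n x. \<Phi> k (as n x / real n), \<lambda>x. \<Phi> k 0) \<in> gen"
| comp1: "smooth_fam \<Phi> \<Longrightarrow> (as, a) \<in> gen \<Longrightarrow> \<Phi> k 0 = 0 \<Longrightarrow>
     (\<lambda>n x. real n * \<Phi> k (as n x / real n), \<lambda>x. \<Phi> (Suc k) 0 * a x) \<in> gen"

lemma gen_cong: "(fs, f) \<in> gen \<Longrightarrow> fs = gs \<Longrightarrow> f = g \<Longrightarrow> (gs, g) \<in> gen"
  by simp

lemma fd_eq: "(f has_derivative f') (at x) \<Longrightarrow> frechet_derivative f (at x) = f'"
  using frechet_derivative_at by metis

lemma fdw: "f differentiable (at x) \<Longrightarrow> (f has_derivative frechet_derivative f (at x)) (at x)"
  using frechet_derivative_works by blast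

lemma comp_deriv:
  assumes sf: "smooth_fam \<Phi>" and d: "(g has_derivative g') (at x)"
  shows "((\<lambda>x. \<Phi> k (g x / c)) has_derivative (\<lambda>h. \<Phi> (Suc k) (g x / c) * (inverse c * g' h))) (at x)"
proof -
  have "((\<lambda>x. inverse c * g x) has_derivative (\<lambda>h. inverse c * g' h)) (at x)"
    using d by (rule has_derivative_mult_right)
  then have "((\<lambda>x. g x / c) has_derivative (\<lambda>h. g' h / c)) (at x)"
    by (simp add: divide_inverse mult.commute)
  moreover have "(\<Phi> k has_derivative (\<lambda>t. t * \<Phi> (Suc k) (g x / c))) (at (g x / c))"
  proof -
    have "(\<Phi> k has_derivative (*) (\<Phi> (Suc k) (g x / c))) (at (g x / c))"
      using sf unfolding smooth_fam_def has_field_derivative_def by blast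
    moreover have "(*) (\<Phi> (Suc k) (g x / c)) = (\<lambda>t. t * \<Phi> (Suc k) (g x / c))"
      by (auto simp: mult.commute)
    ultimately show ?thesis by simp
  qed
  ultimately have "((\<lambda>x. \<Phi> k (g x / c)) has_derivative (\<lambda>h. g' h / c * \<Phi> (Suc k) (g x / c))) (at x)"
    using has_derivative_compose by blast
  moreover have "(\<lambda>h. g' h / c * \<Phi> (Suc k) (g x / c)) = (\<lambda>h. \<Phi> (Suc k) (g x / c) * (inverse c * g' h))"
    by (rule ext) (simp add: divide_inverse ac_simps)
  ultimately show ?thesis by simp
qed

lemma gen_deriv:
  assumes "(fs, f) \<in> gen"
  shows "(\<forall>n x. fs n differentiable (at x)) \<and> (\<forall>x. f differentiable (at x)) \<and>
    (\<forall>v. (\<lambda>n x. frechet_derivative (fs n) (at x) v, \<lambda>x. frechet_derivative f (at x) v) \<in> gen)"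
  using assms
proof (induction rule: gen.induct)
  case (lin l)
  have fd: "frechet_derivative l (at x) = l" for x
    by (rule fd_eq) (simp add: lin bounded_linear_imp_has_derivative)
  show ?case using lin
    by (auto simp: fd differentiable_def intro!: bounded_linear_imp_has_derivative gen.const)
next
  case (const c L)
  have fd: "frechet_derivative (\<lambda>x. a) (at x) = (\<lambda>h. 0)" for x and a :: real
    by (rule fd_eq) simp
  show ?case by (auto simp: fd intro!: gen.const)
next
  case (add fs f gs g)
  have fd: "frechet_derivative (\<lambda>x. F x + G x) (at x) =
     (\<lambda>h. frechet_derivative F (at x) h + frechet_derivative G (at x) h)"
    if "F differentiable (at x)" "G differentiable (at x)" for F G :: "'a \<Rightarrow> real" and x
    by (rule fd_eq) (intro has_derivative_add fdw that)
  show ?case using add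
    by (auto simp: fd intro!: gen.add)
next
  case (mult fs f gs g)
  have fd: "frechet_derivative (\<lambda>x. F x * G x) (at x) =
     (\<lambda>h. F x * frechet_derivative G (at x) h + frechet_derivative F (at x) h * G x)"
    if "F differentiable (at x)" "G differentiable (at x)" for F G :: "'a \<Rightarrow> real" and x
    by (rule fd_eq) (intro has_derivative_mult fdw that)
  show ?case using mult
    by (auto simp: fd intro!: gen.add gen.mult)
next
  case (comp0 \<Phi> as a k)
  have fd: "frechet_derivative (\<lambda>x. \<Phi> k (as n x / real n)) (at x) =
      (\<lambda>h. \<Phi> (Suc k) (as n x / real n) * (inverse (real n) * frechet_derivative (as n) (at x) h))" for n x
    using comp0 by (intro fd_eq comp_deriv fdw) auto
  have fd0: "frechet_derivative (\<lambda>x. b) (at x) = (\<lambda>h. 0)" for x and b :: real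
    by (rule fd_eq) simp
  have "(\<lambda>n x. \<Phi> (Suc k) (as n x / real n) * (inverse (real n) * frechet_derivative (as n) (at x) v),
         \<lambda>x. \<Phi> (Suc k) 0 * (0 * frechet_derivative a (at x) v)) \<in> gen" for v
    using comp0 by (intro gen.mult gen.comp0 gen.const lim_inverse_n) auto
  moreover have "\<forall>n x. (\<lambda>x. \<Phi> k (as n x / real n)) differentiable (at x)"
  proof (intro allI)
    fix n x
    have "as n differentiable (at x)" using comp0 by (auto simp: differentiable_def)
    from comp_deriv[OF comp0(1) fdw[OF this]]
    show "(\<lambda>x. \<Phi> k (as n x / real n)) differentiable (at x)"
      unfolding differentiable_def by blast
  qed
  ultimately show ?case using comp0
    by (auto simp: fd fd0)
next
  case (comp1 \<Phi> as a k)
  have fd: "frechet_derivative (\<lambda>x. real n * \<Phi> k (as n x / real n)) (at x) =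
      (\<lambda>h. \<Phi> (Suc k) (as n x / real n) * ((real n * inverse (real n)) * frechet_derivative (as n) (at x) h))" for n x
  proof -
    have "((\<lambda>x. real n * \<Phi> k (as n x / real n)) has_derivative
      (\<lambda>h. real n * (\<Phi> (Suc k) (as n x / real n) * (inverse (real n) * frechet_derivative (as n) (at x) h)))) (at x)"
      using comp1 by (intro has_derivative_mult_right comp_deriv fdw) auto
    then have "frechet_derivative (\<lambda>x. real n * \<Phi> k (as n x / real n)) (at x) =
      (\<lambda>h. real n * (\<Phi> (Suc k) (as n x / real n) * (inverse (real n) * frechet_derivative (as n) (at x) h)))"
      by (rule fd_eq)
    then show ?thesis by (simp add: algebra_simps)
  qed
  have fda: "frechet_derivative (\<lambda>x. b * a x) (at x) = (\<lambda>h. b * frechet_derivative a (at x) h)" for x b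
    using comp1 by (intro fd_eq has_derivative_mult_right fdw) auto
  have lim1: "(\<lambda>n. real n * inverse (real n)) \<longlonglongrightarrow> 1"
  proof (rule tendsto_eventually)
    show "\<forall>\<^sub>F n in sequentially. real n * inverse (real n) = 1"
      using eventually_ge_at_top[of "1::nat"] by eventually_elim simp
  qed
  have G: "(\<lambda>n x. \<Phi> (Suc k) (as n x / real n) * ((real n * inverse (real n)) * frechet_derivative (as n) (at x) v),
         \<lambda>x. \<Phi> (Suc k) 0 * (1 * frechet_derivative a (at x) v)) \<in> gen" for v
    using comp1 by (intro gen.mult gen.comp0 gen.const lim1) auto
  have D3: "\<forall>v. (\<lambda>n x. frechet_derivative (\<lambda>x. real n * \<Phi> k (as n x / real n)) (at x) v,
           \<lambda>x. frechet_derivative (\<lambda>x. \<Phi> (Suc k) 0 * a x) (at x) v) \<in> gen"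
    unfolding fd fda using G by simp
  have D1: "\<forall>n x. (\<lambda>x. real n * \<Phi> k (as n x / real n)) differentiable (at x)"
  proof (intro allI)
    fix n x
    have "as n differentiable (at x)" using comp1 by (auto simp: differentiable_def)
    from has_derivative_mult_right[OF comp_deriv[OF comp1(1) fdw[OF this]]]
    show "(\<lambda>x. real n * \<Phi> k (as n x / real n)) differentiable (at x)"
      unfolding differentiable_def by blast
  qed
  have D2: "\<forall>x. (\<lambda>x. \<Phi> (Suc k) 0 * a x) differentiable (at x)"
  proof
    fix x
    have "a differentiable (at x)" using comp1 by (auto simp: differentiable_def)
    from has_derivative_mult_right[OF fdw[OF this]]
    show "(\<lambda>x. \<Phi> (Suc k) 0 * a x) differentiable (at x)"
      unfolding differentiable_def by blast
  qed
  show ?case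
    apply (rule conjI)
     apply (rule D1)
    apply (rule conjI)
     apply (rule D2)
    apply (rule D3)
    done
qed

lemma gen_iter:
  assumes "(fs, f) \<in> gen"
  shows "(\<lambda>n. iter_dderiv vs (fs n), iter_dderiv vs f) \<in> gen"
proof (induction vs)
  case Nil
  then show ?case using assms by simp
next
  case (Cons v vs)
  from gen_deriv[OF Cons] show ?case by simp
qed

lemma gen_all_diff:
  assumes "(fs, f) \<in> gen"
  shows "iter_dderiv vs (fs n) differentiable (at x)" "iter_dderiv vs f differentiable (at x)"
  using gen_deriv[OF gen_iter[OF assms, of vs]] by auto

lemma ev_bound:
  fixes as :: "nat \<Rightarrow> 'a \<Rightarrow> real"
  assumes "uniform_limit U as a sequentially" "\<forall>x\<in>U. \<bar>a x\<bar> \<le> B"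
  shows "\<forall>\<^sub>F n in sequentially. \<forall>x\<in>U. \<bar>as n x\<bar> \<le> \<bar>B\<bar> + 1"
proof -
  have "\<forall>\<^sub>F n in sequentially. \<forall>x\<in>U. dist (as n x) (a x) < 1"
    using uniform_limitD[OF assms(1)] by simp
  then show ?thesis
  proof eventually_elim
    case (elim n)
    show ?case
    proof
      fix x assume "x \<in> U"
      then have "\<bar>as n x - a x\<bar> < 1" "\<bar>a x\<bar> \<le> B" using elim assms(2) by (auto simp: dist_real_def)
      then show "\<bar>as n x\<bar> \<le> \<bar>B\<bar> + 1" by linarith
    qed
  qed
qed

lemma sf_cont:
  assumes "smooth_fam \<Phi>" "e > 0"
  shows "\<exists>d>0. \<forall>t. \<bar>t\<bar> < d \<longrightarrow> \<bar>\<Phi> k t - \<Phi> k 0\<bar> < e"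
proof -
  have "isCont (\<Phi> k) 0"
    using assms(1) DERIV_isCont unfolding smooth_fam_def by blast
  then have "continuous (at 0) (\<Phi> k)" by (simp add: isCont_def continuous_at)
  then obtain d where "d > 0" "\<forall>t. dist t 0 < d \<longrightarrow> dist (\<Phi> k t) (\<Phi> k 0) < e"
    using assms(2) unfolding continuous_at_eps_delta by blast
  then show ?thesis by (auto simp: dist_real_def)
qed

lemma sf_mvt:
  assumes "smooth_fam \<Phi>"
  shows "\<exists>t. \<bar>t\<bar> \<le> \<bar>s\<bar> \<and> \<Phi> k s - \<Phi> k 0 = s * \<Phi> (Suc k) t"
proof -
  have D: "\<And>y. DERIV (\<Phi> k) y :> \<Phi> (Suc k) y" using assms unfolding smooth_fam_def by blast
  consider "s > 0" | "s < 0" | "s = 0" by linarith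
  then show ?thesis
  proof cases
    case 1
    from MVT2[OF 1 D] obtain z where "0 < z" "z < s" "\<Phi> k s - \<Phi> k 0 = (s - 0) * \<Phi> (Suc k) z" by blast
    then show ?thesis by (intro exI[of _ z]) auto
  next
    case 2
    from MVT2[OF 2 D] obtain z where "s < z" "z < 0" "\<Phi> k 0 - \<Phi> k s = (0 - s) * \<Phi> (Suc k) z" by blast
    then show ?thesis by (intro exI[of _ z]) (auto simp: algebra_simps)
  next
    case 3
    then show ?thesis by (intro exI[of _ 0]) auto
  qed
qed

lemma ev_small:
  assumes "d > 0"
  shows "\<forall>\<^sub>F n in sequentially. C / real n < d \<and> real n \<ge> 1"
proof -
  obtain N :: nat where N: "N > C / d" using reals_Archimedean2 by blast
  show ?thesis
    using eventually_ge_at_top[of "N + 1"]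
  proof eventually_elim
    case (elim n)
    then have n: "real n \<ge> N + 1" by simp
    then have "C / d < real n" using N by linarith
    then have "C < real n * d" using assms by (simp add: pos_divide_less_eq)
    moreover have "real n > 0" using n by linarith
    ultimately have "C / real n < d" by (simp add: pos_divide_less_eq mult.commute)
    then show ?case using n by linarith
  qed
qed

lemma gen_unif:
  assumes U: "bounded U" and G: "(fs, f) \<in> gen"
  shows "uniform_limit U fs f sequentially \<and> (\<exists>B. \<forall>x\<in>U. \<bar>f x\<bar> \<le> B)"
  using G
proof (induction rule: gen.induct)
  case (lin l)
  have "uniform_limit U (\<lambda>n. l) l sequentially" by (rule uniform_limit_const)
  moreover have "bounded (l ` U)" using U lin by (rule bounded_linear_image)
  then obtain B where "\<forall>y\<in>l ` U. norm y \<le> B" unfolding bounded_iff by blast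
  then have "\<forall>x\<in>U. \<bar>l x\<bar> \<le> B" by auto
  ultimately show ?case by blast
next
  case (const c L)
  have "uniform_limit U (\<lambda>n x. c n) (\<lambda>x. L) sequentially"
  proof (rule uniform_limitI)
    fix e :: real assume "e > 0"
    with const have "\<forall>\<^sub>F n in sequentially. dist (c n) L < e" by (rule tendstoD)
    then show "\<forall>\<^sub>F n in sequentially. \<forall>x\<in>U. dist (c n) L < e" by simp
  qed
  then show ?case by auto
next
  case (add fs f gs g)
  then obtain B1 B2 where "\<forall>x\<in>U. \<bar>f x\<bar> \<le> B1" "\<forall>x\<in>U. \<bar>g x\<bar> \<le> B2" by blast
  then have "\<forall>x\<in>U. \<bar>f x + g x\<bar> \<le> B1 + B2" by (auto intro!: order_trans[OF abs_triangle_ineq] add_mono)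
  with add show ?case by (auto intro: uniform_limit_add)
next
  case (mult fs f gs g)
  then obtain B1 B2 where b: "\<forall>x\<in>U. \<bar>f x\<bar> \<le> B1" "\<forall>x\<in>U. \<bar>g x\<bar> \<le> B2" by blast
  then have "\<forall>x\<in>U. \<bar>f x * g x\<bar> \<le> B1 * B2" by (auto simp: abs_mult intro!: mult_mono)
  moreover have "bounded (f ` U)" "bounded (g ` U)" using b unfolding bounded_iff by auto
  ultimately show ?case using mult by (auto intro: uniform_lim_mult)
next
  case (comp0 \<Phi> as a k)
  from comp0 obtain B where "\<forall>x\<in>U. \<bar>a x\<bar> \<le> B" by blast
  with comp0 have EB: "\<forall>\<^sub>F n in sequentially. \<forall>x\<in>U. \<bar>as n x\<bar> \<le> \<bar>B\<bar> + 1"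
    using ev_bound by blast
  have "uniform_limit U (\<lambda>n x. \<Phi> k (as n x / real n)) (\<lambda>x. \<Phi> k 0) sequentially"
  proof (rule uniform_limitI)
    fix e :: real assume "e > 0"
    from sf_cont[OF comp0(1) this] obtain d where d: "d > 0" "\<forall>t. \<bar>t\<bar> < d \<longrightarrow> \<bar>\<Phi> k t - \<Phi> k 0\<bar> < e"
      by blast
    show "\<forall>\<^sub>F n in sequentially. \<forall>x\<in>U. dist (\<Phi> k (as n x / real n)) (\<Phi> k 0) < e"
      using EB ev_small[OF d(1), of "\<bar>B\<bar> + 1"]
    proof eventually_elim
      case (elim n)
      show ?case
      proof
        fix x assume "x \<in> U"
        with elim have "\<bar>as n x\<bar> \<le> \<bar>B\<bar> + 1" by blast
        moreover have "real n > 0" using elim by linarith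
        ultimately have "\<bar>as n x / real n\<bar> \<le> (\<bar>B\<bar> + 1) / real n"
          by (simp add: abs_div divide_right_mono)
        then have "\<bar>as n x / real n\<bar> < d" using elim by linarith
        then show "dist (\<Phi> k (as n x / real n)) (\<Phi> k 0) < e" using d by (simp add: dist_real_def)
      qed
    qed
  qed
  then show ?case by auto
next
  case (comp1 \<Phi> as a k)
  from comp1 obtain B where B: "\<forall>x\<in>U. \<bar>a x\<bar> \<le> B" by blast
  with comp1 have EB: "\<forall>\<^sub>F n in sequentially. \<forall>x\<in>U. \<bar>as n x\<bar> \<le> \<bar>B\<bar> + 1"
    using ev_bound by blast
  define c where "c = \<Phi> (Suc k) 0"
  have "uniform_limit U (\<lambda>n x. real n * \<Phi> k (as n x / real n)) (\<lambda>x. c * a x) sequentially"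
  proof (rule uniform_limitI)
    fix e :: real assume "e > 0"
    define B' where "B' = \<bar>B\<bar> + 1"
    have B': "B' > 0" unfolding B'_def by simp
    have e1: "e / (2 * B') > 0" using \<open>e > 0\<close> B' by simp
    from sf_cont[OF comp1(1) e1, of "Suc k"] obtain d where
      d: "d > 0" "\<forall>t. \<bar>t\<bar> < d \<longrightarrow> \<bar>\<Phi> (Suc k) t - \<Phi> (Suc k) 0\<bar> < e / (2 * B')"
      by blast
    have cpos: "\<bar>c\<bar> + 1 > 0" by (simp add: add_pos_nonneg)
    have e2: "e / (2 * (\<bar>c\<bar> + 1)) > 0" using \<open>e > 0\<close> by (simp add: add_pos_nonneg)
    have UL: "\<forall>\<^sub>F n in sequentially. \<forall>x\<in>U. dist (as n x) (a x) < e / (2 * (\<bar>c\<bar> + 1))"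
      using uniform_limitD[OF conjunct1[OF comp1(4)] e2] .
    show "\<forall>\<^sub>F n in sequentially. \<forall>x\<in>U. dist (real n * \<Phi> k (as n x / real n)) (c * a x) < e"
      using EB ev_small[OF d(1), of "B'"] UL
    proof eventually_elim
      case (elim n)
      show ?case
      proof
        fix x assume "x \<in> U"
        with elim have asb: "\<bar>as n x\<bar> \<le> B'" unfolding B'_def by blast
        have np: "real n > 0" using elim by linarith
        then have "\<bar>as n x / real n\<bar> \<le> B' / real n"
          using asb by (simp add: abs_div divide_right_mono)
        then have sd: "\<bar>as n x / real n\<bar> < d" using elim by linarith
        obtain t where t: "\<bar>t\<bar> \<le> \<bar>as n x / real n\<bar>"
          "\<Phi> k (as n x / real n) - \<Phi> k 0 = (as n x / real n) * \<Phi> (Suc k) t"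
          using sf_mvt[OF comp1(1)] by blast
        have "real n * \<Phi> k (as n x / real n) = as n x * \<Phi> (Suc k) t"
          using t(2) comp1(3) np by (simp add: field_simps)
        then have eq: "real n * \<Phi> k (as n x / real n) - c * a x =
            as n x * (\<Phi> (Suc k) t - \<Phi> (Suc k) 0) + c * (as n x - a x)"
          unfolding c_def by (simp add: algebra_simps)
        have "\<bar>\<Phi> (Suc k) t - \<Phi> (Suc k) 0\<bar> < e / (2 * B')" using d t sd by simp
        then have "\<bar>as n x * (\<Phi> (Suc k) t - \<Phi> (Suc k) 0)\<bar> \<le> B' * (e / (2 * B'))"
          unfolding abs_mult using asb by (intro mult_mono) auto
        also have "\<dots> = e / 2" using B' by simp
        finally have p1: "\<bar>as n x * (\<Phi> (Suc k) t - \<Phi> (Suc k) 0)\<bar> \<le> e / 2" .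
        have "\<bar>as n x - a x\<bar> < e / (2 * (\<bar>c\<bar> + 1))" using elim \<open>x \<in> U\<close> by (simp add: dist_real_def)
        then have "\<bar>c * (as n x - a x)\<bar> \<le> (\<bar>c\<bar> + 1) * (e / (2 * (\<bar>c\<bar> + 1)))"
          unfolding abs_mult by (intro mult_mono) auto
        also have "\<dots> = e / 2" using cpos by (simp add: field_simps)
        finally have "\<bar>c * (as n x - a x)\<bar> \<le> e / 2" .
        moreover have "\<bar>c * (as n x - a x)\<bar> < e / 2 \<or> \<bar>as n x * (\<Phi> (Suc k) t - \<Phi> (Suc k) 0)\<bar> < e / 2"
        proof -
          have "\<bar>c * (as n x - a x)\<bar> \<le> \<bar>c\<bar> * (e / (2 * (\<bar>c\<bar> + 1)))"
            using \<open>\<bar>as n x - a x\<bar> < _\<close> unfolding abs_mult by (intro mult_left_mono) auto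
          also have "\<dots> < (\<bar>c\<bar> + 1) * (e / (2 * (\<bar>c\<bar> + 1)))"
            using e2 by (intro mult_strict_right_mono) auto
          also have "\<dots> = e / 2" using cpos by (simp add: field_simps)
          finally show ?thesis by blast
        qed
        ultimately show "dist (real n * \<Phi> k (as n x / real n)) (c * a x) < e"
          unfolding dist_real_def eq using p1 abs_triangle_ineq[of "as n x * (\<Phi> (Suc k) t - \<Phi> (Suc k) 0)" "c * (as n x - a x)"]
          by linarith
      qed
    qed
  qed
  moreover have "\<forall>x\<in>U. \<bar>c * a x\<bar> \<le> \<bar>c\<bar> * B" using B unfolding abs_mult by (auto intro: mult_left_mono)
  ultimately show ?case unfolding c_def by blast
qed



lemma rep_deriv:
  fixes g :: "real \<Rightarrow> real"
  assumes rep: "\<forall>y\<in>ball x r. summable (\<lambda>i. c i * (y - x) ^ i) \<and> g y = (\<Sum>i. c i * (y - x) ^ i)"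
    and y: "y \<in> ball x r"
  shows "(g has_field_derivative (\<Sum>i. diffs c i * (y - x) ^ i)) (at y)"
    and "\<And>z. norm z < r \<Longrightarrow> summable (\<lambda>i. c i * z ^ i)"
proof -
  show sm: "summable (\<lambda>i. c i * z ^ i)" if "norm z < r" for z :: real
  proof -
    have "x + z \<in> ball x r" using that by (simp add: dist_real_def)
    then have "summable (\<lambda>i. c i * ((x + z) - x) ^ i)" using rep by blast
    then show ?thesis by simp
  qed
  have ny: "norm (y - x) < r" using y by (simp add: dist_real_def abs_minus_commute)
  have d0: "((\<lambda>z. \<Sum>i. c i * z ^ i) has_field_derivative (\<Sum>i. diffs c i * (y - x) ^ i)) (at (y - x))"
    by (rule termdiffs_strong'[OF sm ny])
  have d1: "((\<lambda>t. t - x) has_real_derivative 1) (at y)"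
    using DERIV_diff[OF DERIV_ident DERIV_const[of x]] by simp
  have "((\<lambda>t. \<Sum>i. c i * (t - x) ^ i) has_field_derivative (\<Sum>i. diffs c i * (y - x) ^ i) * 1) (at y)"
    by (rule DERIV_chain2[where f="\<lambda>z. \<Sum>i. c i * z ^ i" and g="\<lambda>t. t - x", OF d0 d1])
  then have d2: "((\<lambda>t. \<Sum>i. c i * (t - x) ^ i) has_field_derivative (\<Sum>i. diffs c i * (y - x) ^ i)) (at y)"
    by simp
  show "(g has_field_derivative (\<Sum>i. diffs c i * (y - x) ^ i)) (at y)"
  proof (rule has_field_derivative_transform_within_open[OF d2 open_ball y])
    fix z assume "z \<in> ball x r"
    then show "(\<Sum>i. c i * (z - x) ^ i) = g z" using rep by auto
  qed
qed

lemma analytic_rep: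
  assumes an: "real_analytic \<psi>"
  shows "\<exists>r>0. \<exists>c. \<forall>y\<in>ball x r. summable (\<lambda>i. c i * (y - x) ^ i) \<and>
            (deriv ^^ k) \<psi> y = (\<Sum>i. c i * (y - x) ^ i)"
proof (induction k arbitrary: x)
  case 0
  from an obtain r c where r: "r > 0" and S: "\<forall>y\<in>ball x r. (\<lambda>k. c k * (y - x) ^ k) sums \<psi> y"
    unfolding real_analytic_def by blast
  show ?case
  proof (intro exI[of _ r] conjI exI[of _ c] ballI)
    fix y assume "y \<in> ball x r"
    then have s: "(\<lambda>k. c k * (y - x) ^ k) sums \<psi> y" using S by blast
    show "summable (\<lambda>i. c i * (y - x) ^ i)" using s by (rule sums_summable)
    show "(deriv ^^ 0) \<psi> y = (\<Sum>i. c i * (y - x) ^ i)" using sums_unique[OF s] by simp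
  qed (rule r)
next
  case (Suc k)
  from Suc.IH[of x] obtain r c where r: "r > 0" and rep: "\<forall>y\<in>ball x r. summable (\<lambda>i. c i * (y - x) ^ i) \<and>
            (deriv ^^ k) \<psi> y = (\<Sum>i. c i * (y - x) ^ i)" by blast
  show ?case
  proof (intro exI[of _ r] conjI exI[of _ "diffs c"] ballI)
    fix y assume y: "y \<in> ball x r"
    have ny: "norm (y - x) < r" using y by (simp add: dist_real_def abs_minus_commute)
    show "summable (\<lambda>i. diffs c i * (y - x) ^ i)" by (rule termdiff_converges[OF ny rep_deriv(2)[OF rep y]])
    show "(deriv ^^ Suc k) \<psi> y = (\<Sum>i. diffs c i * (y - x) ^ i)"
      unfolding funpow.simps(2) comp_def by (rule DERIV_imp_deriv[OF rep_deriv(1)[OF rep y]])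
  qed (rule r)
qed

lemma psi_deriv:
  assumes an: "real_analytic \<psi>"
  shows "((deriv ^^ k) \<psi> has_real_derivative (deriv ^^ Suc k) \<psi> y) (at y)"
proof -
  from analytic_rep[OF an, of y k] obtain r c where r: "r > 0" and
    rep: "\<forall>z\<in>ball y r. summable (\<lambda>i. c i * (z - y) ^ i) \<and> (deriv ^^ k) \<psi> z = (\<Sum>i. c i * (z - y) ^ i)"
    by blast
  have y: "y \<in> ball y r" using r by simp
  from rep_deriv(1)[OF rep y] have "(deriv ^^ k) \<psi> differentiable (at y)"
    by (rule differentiableI[OF has_field_derivative_imp_has_derivative])
  then show ?thesis
    unfolding funpow.simps(2) comp_def by (rule DERIV_deriv_iff_real_differentiable[THEN iffD2])
qed



definition trigf :: "nat \<Rightarrow> real \<Rightarrow> real" where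
  "trigf k y = sin (y + real k * pi / 2)"

lemma trig_smooth: "smooth_fam trigf"
  unfolding smooth_fam_def
proof (intro allI)
  fix k y
  have "((\<lambda>y. sin (y + real k * pi / 2)) has_real_derivative cos (y + real k * pi / 2) * (1 + 0)) (at y)"
    by (intro DERIV_chain2[OF DERIV_sin] DERIV_add DERIV_ident DERIV_const)
  moreover have "cos (y + real k * pi / 2) = sin (y + real (Suc k) * pi / 2)"
  proof -
    have "y + real (Suc k) * pi / 2 = (y + real k * pi / 2) + pi / 2" by (simp add: algebra_simps)
    then show ?thesis by (simp only:) (subst sin_add, simp)
  qed
  ultimately show "(trigf k has_real_derivative trigf (Suc k) y) (at y)"
    unfolding trigf_def by simp
qed

lemma trigf0 [simp]: "trigf 0 y = sin y" and trigf1 [simp]: "trigf (Suc 0) 0 = 1"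
  by (simp_all add: trigf_def)

lemma psi_smooth: "real_analytic \<psi> \<Longrightarrow> smooth_fam (\<lambda>k. (deriv ^^ k) \<psi>)"
  unfolding smooth_fam_def using psi_deriv by blast

lemma dist3: "dist (a::real, b::real, c::real) (a', b', c') \<le> dist a a' + dist b b' + dist c c'"
proof -
  have "dist (b, c) (b', c') \<le> dist b b' + dist c c'"
    unfolding dist_Pair_Pair using sqrt_sum_squares_le_sum_abs[of "dist b b'" "dist c c'"] by simp
  moreover have "dist (a, b, c) (a', b', c') \<le> dist a a' + dist (b, c) (b', c')"
    unfolding dist_Pair_Pair[of a "(b,c)"] using sqrt_sum_squares_le_sum_abs[of "dist a a'" "dist (b, c) (b', c')"] by simp
  ultimately show ?thesis by linarith
qed

lemma unif_triple:
  fixes fs gs hs :: "nat \<Rightarrow> 'a \<Rightarrow> real"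
  assumes "uniform_limit U fs f sequentially" "uniform_limit U gs g sequentially" "uniform_limit U hs h sequentially"
  shows "uniform_limit U (\<lambda>n x. (fs n x, gs n x, hs n x)) (\<lambda>x. (f x, g x, h x)) sequentially"
proof (rule uniform_limitI)
  fix e :: real assume e: "e > 0"
  then have e3: "e / 3 > 0" by simp
  show "\<forall>\<^sub>F n in sequentially. \<forall>x\<in>U. dist (fs n x, gs n x, hs n x) (f x, g x, h x) < e"
    using uniform_limitD[OF assms(1) e3] uniform_limitD[OF assms(2) e3] uniform_limitD[OF assms(3) e3]
  proof eventually_elim
    case (elim n)
    show ?case
    proof
      fix x assume "x \<in> U"
      with elim have "dist (fs n x) (f x) < e/3" "dist (gs n x) (g x) < e/3" "dist (hs n x) (h x) < e/3" by auto
      then show "dist (fs n x, gs n x, hs n x) (f x, g x, h x) < e"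
        using dist3[of "fs n x" "gs n x" "hs n x" "f x" "g x" "h x"] by linarith
    qed
  qed
qed

lemma iter_triple:
  fixes f g h :: "'a::real_normed_vector \<Rightarrow> real"
  assumes df: "\<And>vs x. iter_dderiv vs f differentiable (at x)"
    and dg: "\<And>vs x. iter_dderiv vs g differentiable (at x)"
    and dh: "\<And>vs x. iter_dderiv vs h differentiable (at x)"
  shows "iter_dderiv vs (\<lambda>x. (f x, g x, h x)) = (\<lambda>x. (iter_dderiv vs f x, iter_dderiv vs g x, iter_dderiv vs h x))"
proof (induction vs)
  case Nil
  then show ?case by simp
next
  case (Cons v vs)
  have "frechet_derivative (\<lambda>x. (iter_dderiv vs f x, iter_dderiv vs g x, iter_dderiv vs h x)) (at x) =
    (\<lambda>w. (frechet_derivative (iter_dderiv vs f) (at x) w, frechet_derivative (iter_dderiv vs g) (at x) w,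
          frechet_derivative (iter_dderiv vs h) (at x) w))" for x
    by (intro fd_eq has_derivative_Pair fdw df dg dh)
  then show ?case using Cons by simp
qed



definition Zs :: "real \<Rightarrow> real \<Rightarrow> real \<Rightarrow> nat \<Rightarrow> real \<times> real \<times> real \<Rightarrow> real" where
  "Zs \<delta> \<beta> \<sigma> n X = snd (snd X) + \<delta>
     - 2 * ((real n ^ 2 + \<delta>) / real n ^ 2) * (real n * sin (pi * fst X / real n)) ^ 2
     - \<sigma> * \<beta> * ((real n ^ 2 + \<delta>) / real n ^ 2) * (real n * sin (2 * pi * fst (snd X) / real n))"

definition Ys :: "real \<Rightarrow> real \<Rightarrow> real \<Rightarrow> real \<Rightarrow> nat \<Rightarrow> real \<times> real \<times> real \<Rightarrow> real" where
  "Ys \<nu> \<delta> \<beta> \<sigma> n X = fst (snd X) + \<nu> * (real n * sin (2 * pi * Zs \<delta> \<beta> \<sigma> n X / real n))"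

definition Xs :: "(real \<Rightarrow> real) \<Rightarrow> real \<Rightarrow> real \<Rightarrow> real \<Rightarrow> real \<Rightarrow> nat \<Rightarrow> real \<times> real \<times> real \<Rightarrow> real" where
  "Xs \<psi> \<mu> \<delta> \<beta> \<sigma> n X = fst X + \<mu> * (real n * sin (2 * pi * fst (snd X) / real n))
     + \<sigma> * (real n * \<psi> (Zs \<delta> \<beta> \<sigma> n X / real n))"

lemma alg_z:
  fixes m :: real
  assumes "m \<noteq> 0"
  shows "\<zeta> / m + (m + \<delta> / m) * ((1 - 2 * a\<^sup>2) - \<sigma> * (\<beta> / m) * b) =
    m + (\<zeta> + \<delta> - 2 * ((m\<^sup>2 + \<delta>) / m\<^sup>2) * (m * a)\<^sup>2 - \<sigma> * \<beta> * ((m\<^sup>2 + \<delta>) / m\<^sup>2) * (m * b)) / m"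
  using assms by (simp add: field_simps power2_eq_square)

lemma sin_per: "sin (2 * pi * (real n + s)) = sin (2 * pi * s)"
proof -
  have "2 * pi * (real n + s) = 2 * pi * s + 2 * real n * pi" by (simp add: algebra_simps)
  then show ?thesis by (simp only:) (subst sin_add, simp)
qed

lemma lift_gen:
  fixes \<psi> :: "real \<Rightarrow> real"
  assumes psi_per: "\<And>s. \<psi> (real n + s) = real n + \<psi> s" and psi_odd: "\<And>t. \<psi> (- t) = - \<psi> t"
    and n: "n \<ge> 1" and \<rho>: "\<rho> = 1 \<or> \<rho> = -1"
    and hc: "cos (2 * pi * x) = \<rho> * (1 - 2 * (sin (pi * \<xi> / real n))\<^sup>2)"
    and hs: "sin (2 * pi * y) = \<rho> * \<sigma> * sin (2 * pi * \<eta> / real n)"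
    and hz: "z = \<rho> * (\<zeta> / real n)"
  shows "lift_f \<psi> (real n + \<delta> / real n) \<mu> \<nu> (\<beta> / real n) (x, y, z) =
    (x + \<mu> * sin (2 * pi * y) + \<rho> * (real n + \<psi> (Zs \<delta> \<beta> \<sigma> n (\<xi>, \<eta>, \<zeta>) / real n)),
     y + \<nu> * (\<rho> * sin (2 * pi * Zs \<delta> \<beta> \<sigma> n (\<xi>, \<eta>, \<zeta>) / real n)),
     \<rho> * (real n + Zs \<delta> \<beta> \<sigma> n (\<xi>, \<eta>, \<zeta>) / real n))"
proof -
  define Z where "Z = Zs \<delta> \<beta> \<sigma> n (\<xi>, \<eta>, \<zeta>)"
  have m0: "real n \<noteq> 0" using n by simp
  have zz: "z + (real n + \<delta> / real n) * (cos (2 * pi * x) - \<beta> / real n * sin (2 * pi * y)) = \<rho> * (real n + Z / real n)"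
  proof -
    have "z + (real n + \<delta> / real n) * (cos (2 * pi * x) - \<beta> / real n * sin (2 * pi * y)) =
      \<rho> * (\<zeta> / real n + (real n + \<delta> / real n) * ((1 - 2 * (sin (pi * \<xi> / real n))\<^sup>2) - \<sigma> * (\<beta> / real n) * sin (2 * pi * \<eta> / real n)))"
      unfolding hc hs hz by (simp add: algebra_simps)
    also have "\<dots> = \<rho> * (real n + Z / real n)"
      unfolding alg_z[OF m0] Z_def Zs_def by simp
    finally show ?thesis .
  qed
  have sz: "sin (2 * pi * (\<rho> * (real n + Z / real n))) = \<rho> * sin (2 * pi * Z / real n)"
  proof -
    have S: "sin (2 * pi * (real n + Z / real n)) = sin (2 * pi * Z / real n)"
      using sin_per[of n "Z / real n"] by simp
    from \<rho> show ?thesis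
    proof
      assume r: "\<rho> = -1"
      have "2 * pi * (\<rho> * (real n + Z / real n)) = - (2 * pi * (real n + Z / real n))" using r by (simp add: algebra_simps)
      then have "sin (2 * pi * (\<rho> * (real n + Z / real n))) = - sin (2 * pi * (real n + Z / real n))"
        by (simp only: sin_minus)
      then show ?thesis using S r by simp
    next
      assume r: "\<rho> = 1"
      then show ?thesis using S by simp
    qed
  qed
  have pz: "\<psi> (\<rho> * (real n + Z / real n)) = \<rho> * (real n + \<psi> (Z / real n))"
    using \<rho> psi_per[of "Z / real n"] psi_odd[of "real n + Z / real n"] by auto
  have "lift_f \<psi> (real n + \<delta> / real n) \<mu> \<nu> (\<beta> / real n) (x, y, z) =
    (x + \<mu> * sin (2 * pi * y) + \<rho> * (real n + \<psi> (Z / real n)),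
     y + \<nu> * (\<rho> * sin (2 * pi * Z / real n)),
     \<rho> * (real n + Z / real n))"
    unfolding lift_f_def Let_def prod.case zz
    unfolding sz pz ..
  then show ?thesis unfolding Z_def .
qed

lemma c_half: "cos (2 * pi * (1/2 + u)) = - cos (2 * pi * u)"
proof -
  have "2 * pi * (1/2 + u) = 2 * pi * u + pi" by (simp add: algebra_simps)
  then show ?thesis by simp
qed

lemma s_half: "sin (2 * pi * (1/2 + u)) = - sin (2 * pi * u)"
proof -
  have "2 * pi * (1/2 + u) = 2 * pi * u + pi" by (simp add: algebra_simps)
  then show ?thesis by simp
qed

lemma c_half_m: "cos (2 * pi * (1/2 - u)) = - cos (2 * pi * u)"
  using c_half[of "-u"] by simp

lemma s_half_m: "sin (2 * pi * (1/2 - u)) = sin (2 * pi * u)"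
  using s_half[of "-u"] by simp

lemma c_dbl: "cos (2 * pi * (\<xi> / m)) = 1 - 2 * (sin (pi * \<xi> / m))\<^sup>2"
proof -
  have "2 * pi * (\<xi> / m) = 2 * (pi * \<xi> / m)" by simp
  then show ?thesis by (simp only: cos_double_sin)
qed

lemma c_dbl': "cos (2 * pi * \<xi> / m) = 1 - 2 * (sin (pi * \<xi> / m))\<^sup>2"
  using c_dbl[of \<xi> m] by simp

lemma fstar_form:
  fixes \<psi> :: "real \<Rightarrow> real"
  assumes psi_per: "\<And>s. \<psi> (real n + s) = real n + \<psi> s" and psi_odd: "\<And>t. \<psi> (- t) = - \<psi> t"
    and n: "n \<ge> 1"
  shows "fstar \<psi> \<mu> \<nu> \<delta> \<beta> p n (\<xi>, \<eta>, \<zeta>) =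
    (Xs \<psi> \<mu> \<delta> \<beta> (sigma_pt p) n (\<xi>, \<eta>, \<zeta>), Ys \<nu> \<delta> \<beta> (sigma_pt p) n (\<xi>, \<eta>, \<zeta>),
     Zs \<delta> \<beta> (sigma_pt p) n (\<xi>, \<eta>, \<zeta>))"
proof -
  have m0: "real n \<noteq> 0" using n by simp
  note LG = lift_gen[OF psi_per psi_odd n]
  show ?thesis
  proof (cases p)
    case Pplus
    have fs: "from_scaled (real n) p (\<xi>, \<eta>, \<zeta>) = (\<xi> / real n, \<eta> / real n, \<zeta> / real n)"
      using Pplus by (simp add: from_scaled_def)
    have h1: "(1::real) = 1 \<or> (1::real) = -1" by simp
    have hc: "cos (2 * pi * (\<xi> / real n)) = (1) * (1 - 2 * (sin (pi * \<xi> / real n))\<^sup>2)"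
      by (simp add: c_dbl c_dbl' cos_minus)
    have hs: "sin (2 * pi * (\<eta> / real n)) = (1) * (1) * sin (2 * pi * \<eta> / real n)"
      by (simp add: c_dbl c_dbl')
    have hz: "\<zeta> / real n = (1) * (\<zeta> / real n)" by simp
    note lf = LG[OF h1 hc hs hz]
    show ?thesis
      unfolding fstar_def Let_def fs lf hs using Pplus m0
      by (simp add: to_scaled_def Xs_def Ys_def field_simps)
  next
    case Qplus
    have fs: "from_scaled (real n) p (\<xi>, \<eta>, \<zeta>) = (- (\<xi> / real n), 1/2 + \<eta> / real n, \<zeta> / real n)"
      using Qplus by (simp add: from_scaled_def)
    have h1: "(1::real) = 1 \<or> (1::real) = -1" by simp
    have hc: "cos (2 * pi * (- (\<xi> / real n))) = (1) * (1 - 2 * (sin (pi * \<xi> / real n))\<^sup>2)"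
      by (simp add: c_dbl c_dbl' s_half cos_minus)
    have hs: "sin (2 * pi * (1/2 + \<eta> / real n)) = (1) * (-1) * sin (2 * pi * \<eta> / real n)"
      by (simp add: c_dbl c_dbl' s_half)
    have hz: "\<zeta> / real n = (1) * (\<zeta> / real n)" by simp
    note lf = LG[OF h1 hc hs hz]
    show ?thesis
      unfolding fstar_def Let_def fs lf hs using Qplus m0
      by (simp add: to_scaled_def Xs_def Ys_def s_half field_simps)
  next
    case Pminus
    have fs: "from_scaled (real n) p (\<xi>, \<eta>, \<zeta>) = (1/2 + - (\<xi> / real n), - (\<eta> / real n), - (\<zeta> / real n))"
      using Pminus by (simp add: from_scaled_def)
    have h1: "(-1::real) = 1 \<or> (-1::real) = -1" by simp
    have hc: "cos (2 * pi * (1/2 + - (\<xi> / real n))) = (-1) * (1 - 2 * (sin (pi * \<xi> / real n))\<^sup>2)"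
      by (simp add: c_dbl c_dbl' c_half c_half_m s_half_m cos_minus)
    have hs: "sin (2 * pi * (- (\<eta> / real n))) = (-1) * (1) * sin (2 * pi * \<eta> / real n)"
      by (simp add: c_dbl c_dbl' c_half c_half_m s_half_m)
    have hz: "- (\<zeta> / real n) = (-1) * (\<zeta> / real n)" by simp
    note lf = LG[OF h1 hc hs hz]
    show ?thesis
      unfolding fstar_def Let_def fs lf hs using Pminus m0
      by (simp add: to_scaled_def Xs_def Ys_def field_simps)
  next
    case Qminus
    have fs: "from_scaled (real n) p (\<xi>, \<eta>, \<zeta>) = (1/2 + \<xi> / real n, 1/2 + - (\<eta> / real n), - (\<zeta> / real n))"
      using Qminus by (simp add: from_scaled_def)
    have h1: "(-1::real) = 1 \<or> (-1::real) = -1" by simp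
    have hc: "cos (2 * pi * (1/2 + \<xi> / real n)) = (-1) * (1 - 2 * (sin (pi * \<xi> / real n))\<^sup>2)"
      by (simp add: c_dbl c_dbl' c_half c_half_m s_half_m s_half cos_minus)
    have hs: "sin (2 * pi * (1/2 + - (\<eta> / real n))) = (-1) * (-1) * sin (2 * pi * \<eta> / real n)"
      by (simp add: c_dbl c_dbl' c_half c_half_m s_half_m s_half)
    have hz: "- (\<zeta> / real n) = (-1) * (\<zeta> / real n)" by simp
    note lf = LG[OF h1 hc hs hz]
    show ?thesis
      unfolding fstar_def Let_def fs lf hs using Qminus m0
      by (simp add: to_scaled_def Xs_def Ys_def s_half field_simps)
  qed
qed



lemma conj_quad:
  fixes \<mu> \<nu> \<delta> \<beta> \<sigma> :: real
  assumes pos: "\<mu> > 0" "\<nu> > 0" "\<delta> > 0"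
  shows "\<exists>T. linear T \<and> bij T \<and>
              (\<forall>X. T (quad_map \<mu> \<nu> \<delta> \<beta> \<sigma> X) =
                   michelson (pi * (32 * \<mu>\<^sup>2 * \<nu>\<^sup>2 * \<delta>) powr (1/6))
                             (\<sigma> * (\<beta> * (2 * \<nu> / (\<delta> * \<mu>\<^sup>2)) powr (1/3))) (T X))"
proof -
  define \<phi> where "\<phi> = pi * (32 * \<mu>\<^sup>2 * \<nu>\<^sup>2 * \<delta>) powr (1/6)"
  define K where "K = (2 * \<nu> / (\<delta> * \<mu>\<^sup>2)) powr (1/3)"
  have x1: "32 * \<mu>\<^sup>2 * \<nu>\<^sup>2 * \<delta> > 0" using pos by simp
  have x2: "2 * \<nu> / (\<delta> * \<mu>\<^sup>2) > 0" using pos by simp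
  have \<phi>pos: "\<phi> > 0" unfolding \<phi>_def using x1 pos by (intro mult_pos_pos pi_gt_zero) simp
  have Kpos: "K > 0" unfolding K_def using x2 pos by simp
  have \<phi>6: "\<phi> ^ 6 = pi ^ 6 * (32 * \<mu>\<^sup>2 * \<nu>\<^sup>2 * \<delta>)"
  proof -
    have "((32 * \<mu>\<^sup>2 * \<nu>\<^sup>2 * \<delta>) powr (1/6)) ^ 6 = (32 * \<mu>\<^sup>2 * \<nu>\<^sup>2 * \<delta>) powr (real 6 * (1/6))"
      using x1 pos by (intro powr_power) simp
    also have "\<dots> = 32 * \<mu>\<^sup>2 * \<nu>\<^sup>2 * \<delta>" using x1 by simp
    finally show ?thesis unfolding \<phi>_def by (simp add: power_mult_distrib)
  qed
  have K3: "K ^ 3 = 2 * \<nu> / (\<delta> * \<mu>\<^sup>2)"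
  proof -
    have "((2 * \<nu> / (\<delta> * \<mu>\<^sup>2)) powr (1/3)) ^ 3 = (2 * \<nu> / (\<delta> * \<mu>\<^sup>2)) powr (real 3 * (1/3))"
      using x2 pos by (intro powr_power) simp
    also have "\<dots> = 2 * \<nu> / (\<delta> * \<mu>\<^sup>2)" using x2 pos by simp
    finally show ?thesis unfolding K_def .
  qed
  have key: "\<phi>\<^sup>2 = 2 * pi\<^sup>2 * \<mu>\<^sup>2 * \<delta> * K\<^sup>2"
  proof (rule power_eq_imp_eq_base[of _ 3])
    have "(\<phi>\<^sup>2) ^ 3 = \<phi> ^ 6" by (simp add: power_mult[symmetric])
    also have "\<dots> = 32 * pi ^ 6 * \<mu>\<^sup>2 * \<nu>\<^sup>2 * \<delta>" using \<phi>6 by simp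
    also have "\<dots> = 8 * pi ^ 6 * \<mu> ^ 6 * \<delta> ^ 3 * (K ^ 3)\<^sup>2"
      unfolding K3 using pos by (simp add: field_simps power2_eq_square eval_nat_numeral)
    also have "\<dots> = (2 * pi\<^sup>2 * \<mu>\<^sup>2 * \<delta> * K\<^sup>2) ^ 3"
      by (simp add: power_mult_distrib power_mult[symmetric] eval_nat_numeral)
    finally show "(\<phi>\<^sup>2) ^ 3 = (2 * pi\<^sup>2 * \<mu>\<^sup>2 * \<delta> * K\<^sup>2) ^ 3" .
  qed (use pos in auto)
  have key2: "\<phi>\<^sup>2 * K = 4 * pi\<^sup>2 * \<nu>"
  proof -
    have "\<phi>\<^sup>2 * K = 2 * pi\<^sup>2 * \<mu>\<^sup>2 * \<delta> * K ^ 3" unfolding key by (simp add: eval_nat_numeral)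
    also have "\<dots> = 4 * pi\<^sup>2 * \<nu>" unfolding K3 using pos by (simp add: field_simps)
    finally show ?thesis .
  qed
  define A where "A = \<phi> / (\<mu> * \<delta> * K)"
  define B where "B = 2 * pi / (\<delta> * K)"
  define C where "C = \<phi> / \<delta>"
  have Apos: "A > 0" unfolding A_def using pos \<phi>pos Kpos by simp
  have Bpos: "B > 0" unfolding B_def using pos Kpos by simp
  have Cpos: "C > 0" unfolding C_def using pos \<phi>pos by simp
  have e1: "\<phi> * B = 2 * pi * \<mu> * A" unfolding A_def B_def using pos Kpos by (simp add: field_simps)
  have e2: "C * \<delta> = \<phi>" unfolding C_def using pos by simp
  have e3: "\<phi> * A\<^sup>2 = 2 * pi\<^sup>2 * C"
  proof -
    have "\<phi> * A\<^sup>2 = \<phi> * \<phi>\<^sup>2 / (\<mu>\<^sup>2 * \<delta>\<^sup>2 * K\<^sup>2)" unfolding A_def by (simp add: power_divide power_mult_distrib)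
    also have "\<dots> = 2 * pi\<^sup>2 * C" unfolding key C_def using pos Kpos by (simp add: field_simps power2_eq_square)
    finally show ?thesis .
  qed
  have e4: "\<phi> * K * B = 2 * pi * C" unfolding B_def C_def using pos Kpos by (simp add: field_simps)
  have e5: "2 * pi * \<nu> * B = \<phi> * C"
  proof -
    have "2 * pi * \<nu> * B = 4 * pi\<^sup>2 * \<nu> / (\<delta> * K)" unfolding B_def by (simp add: power2_eq_square)
    also have "\<dots> = \<phi>\<^sup>2 / \<delta>" unfolding key2[symmetric] using pos Kpos by (simp add: field_simps)
    also have "\<dots> = \<phi> * C" unfolding C_def by (simp add: power2_eq_square)
    finally show ?thesis .
  qed
  define T where "T = (\<lambda>X::real \<times> real \<times> real. (A * fst X, B * fst (snd X), C * snd (snd X)))"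
  define Ti where "Ti = (\<lambda>X::real \<times> real \<times> real. (fst X / A, fst (snd X) / B, snd (snd X) / C))"
  have lin: "linear T"
    by (rule linearI) (auto simp: T_def algebra_simps)
  have bij: "bij T"
  proof (rule o_bij[of Ti])
    show "Ti \<circ> T = id" using Apos Bpos Cpos by (auto simp: T_def Ti_def fun_eq_iff)
    show "T \<circ> Ti = id" using Apos Bpos Cpos by (auto simp: T_def Ti_def fun_eq_iff)
  qed
  have conj: "T (quad_map \<mu> \<nu> \<delta> \<beta> \<sigma> X) = michelson \<phi> (\<sigma> * (\<beta> * K)) (T X)" for X
  proof -
    obtain \<xi> \<eta> \<zeta> where X: "X = (\<xi>, \<eta>, \<zeta>)" by (cases X) auto
    define Z where "Z = \<zeta> + \<delta> - 2 * pi\<^sup>2 * \<xi>\<^sup>2 - 2 * pi * \<sigma> * \<beta> * \<eta>"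
    have W: "C * \<zeta> + \<phi> * (1 - (A * \<xi>)\<^sup>2 - \<sigma> * (\<beta> * K) * (B * \<eta>)) = C * Z"
    proof -
      have "C * \<zeta> + \<phi> * (1 - (A * \<xi>)\<^sup>2 - \<sigma> * (\<beta> * K) * (B * \<eta>)) =
        C * \<zeta> + \<phi> - (\<phi> * A\<^sup>2) * \<xi>\<^sup>2 - \<sigma> * \<beta> * (\<phi> * K * B) * \<eta>"
        by (simp add: algebra_simps power2_eq_square)
      also have "\<dots> = C * \<zeta> + \<phi> - (2 * pi\<^sup>2 * C) * \<xi>\<^sup>2 - \<sigma> * \<beta> * (2 * pi * C) * \<eta>"
        unfolding e3 e4 ..
      also have "\<dots> = C * Z" unfolding e2[symmetric] Z_def by (simp add: algebra_simps)
      finally show ?thesis .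
    qed
    have q: "quad_map \<mu> \<nu> \<delta> \<beta> \<sigma> X = (\<xi> + 2 * pi * \<mu> * \<eta>, \<eta> + 2 * pi * \<nu> * Z, Z)"
      unfolding quad_map_def X Z_def by (simp add: Let_def)
    have m: "michelson \<phi> (\<sigma> * (\<beta> * K)) (T X) = (A * \<xi> + \<phi> * (B * \<eta>), B * \<eta> + \<phi> * (C * Z), C * Z)"
      unfolding michelson_def T_def X by (simp add: Let_def W)
    show ?thesis unfolding q m unfolding T_def
      using e1 e5 by (simp add: algebra_simps)
  qed
  show ?thesis unfolding \<phi>_def[symmetric] K_def[symmetric]
    using lin bij conj by blast
qed



lemma c1_lim: "(\<lambda>n. (real n ^ 2 + \<delta>) / real n ^ 2) \<longlonglongrightarrow> 1"
proof -
  have "(\<lambda>n. 1 + \<delta> * (inverse (real n)) ^ 2) \<longlonglongrightarrow> 1 + \<delta> * 0 ^ 2"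
    by (intro tendsto_intros lim_inverse_n)
  then have L: "(\<lambda>n. 1 + \<delta> * (inverse (real n)) ^ 2) \<longlonglongrightarrow> 1" by simp
  have "\<forall>\<^sub>F n in sequentially. 1 + \<delta> * (inverse (real n)) ^ 2 = (real n ^ 2 + \<delta>) / real n ^ 2"
    using eventually_ge_at_top[of "1::nat"]
    by eventually_elim (simp add: field_simps power_inverse)
  from Lim_transform_eventually[OF L this] show ?thesis .
qed

definition Zl :: "real \<Rightarrow> real \<Rightarrow> real \<Rightarrow> real \<times> real \<times> real \<Rightarrow> real" where
  "Zl \<delta> \<beta> \<sigma> X = snd (snd X) + \<delta> - 2 * pi\<^sup>2 * (fst X)\<^sup>2 - 2 * pi * \<sigma> * \<beta> * fst (snd X)"

lemma bl_fst: "bounded_linear (\<lambda>X::real \<times> real \<times> real. c * fst X)"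
  by (intro bounded_linear_compose[OF bounded_linear_mult_right bounded_linear_fst])
lemma bl_fst_snd: "bounded_linear (\<lambda>X::real \<times> real \<times> real. c * fst (snd X))"
  by (intro bounded_linear_compose[OF bounded_linear_mult_right]
      bounded_linear_compose[OF bounded_linear_fst bounded_linear_snd])
lemma bl_snd_snd: "bounded_linear (\<lambda>X::real \<times> real \<times> real. c * snd (snd X))"
  by (intro bounded_linear_compose[OF bounded_linear_mult_right]
      bounded_linear_compose[OF bounded_linear_snd bounded_linear_snd])

lemma gconst: "(\<lambda>n (x::real \<times> real \<times> real). c, \<lambda>x. c) \<in> gen"
  using gen.const[of "\<lambda>n. c" c] by simp

lemma S1_gen: "(\<lambda>n (X::real \<times> real \<times> real). real n * sin (c * fst X / real n), \<lambda>X. c * fst X) \<in> gen"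
  using gen.comp1[OF trig_smooth gen.lin[OF bl_fst[of c]], of 0] by simp

lemma S2_gen: "(\<lambda>n (X::real \<times> real \<times> real). real n * sin (c * fst (snd X) / real n), \<lambda>X. c * fst (snd X)) \<in> gen"
  using gen.comp1[OF trig_smooth gen.lin[OF bl_fst_snd[of c]], of 0] by simp

lemma zs_alg: "1 * z + d + (-2) * c * (s * s) + (-\<sigma> * \<beta>) * c * t = z + d - 2 * c * s\<^sup>2 - \<sigma> * \<beta> * c * t"
  for z d c s t \<sigma> \<beta> :: real
  by (simp add: power2_eq_square algebra_simps)

lemma Z_gen: "(Zs \<delta> \<beta> \<sigma>, Zl \<delta> \<beta> \<sigma>) \<in> gen"
proof -
  have c1: "(\<lambda>n (x::real \<times> real \<times> real). (real n ^ 2 + \<delta>) / real n ^ 2, \<lambda>x. 1) \<in> gen"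
    using gen.const[OF c1_lim[of \<delta>]] .
  have L: "(\<lambda>n (X::real \<times> real \<times> real). 1 * snd (snd X), \<lambda>X. 1 * snd (snd X)) \<in> gen"
    by (rule gen.lin[OF bl_snd_snd])
  have G: "(\<lambda>n X. 1 * snd (snd X) + \<delta> + (-2) * ((real n ^ 2 + \<delta>) / real n ^ 2) *
               ((real n * sin (pi * fst X / real n)) * (real n * sin (pi * fst X / real n)))
            + (- \<sigma> * \<beta>) * ((real n ^ 2 + \<delta>) / real n ^ 2) * (real n * sin (2 * pi * fst (snd X) / real n)),
           \<lambda>X. 1 * snd (snd X) + \<delta> + (-2) * 1 * ((pi * fst X) * (pi * fst X)) + (- \<sigma> * \<beta>) * 1 * (2 * pi * fst (snd X))) \<in> gen"
    by (intro gen.add gen.mult L gconst c1 S1_gen S2_gen)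
  show ?thesis
  proof (rule gen_cong[OF G])
    show "(\<lambda>n X. 1 * snd (snd X) + \<delta> + (-2) * ((real n ^ 2 + \<delta>) / real n ^ 2) *
               ((real n * sin (pi * fst X / real n)) * (real n * sin (pi * fst X / real n)))
            + (- \<sigma> * \<beta>) * ((real n ^ 2 + \<delta>) / real n ^ 2) * (real n * sin (2 * pi * fst (snd X) / real n))) =
          Zs \<delta> \<beta> \<sigma>"
      by (intro ext) (simp only: zs_alg Zs_def)
    show "(\<lambda>X. 1 * snd (snd X) + \<delta> + (-2) * 1 * ((pi * fst X) * (pi * fst X)) + (- \<sigma> * \<beta>) * 1 * (2 * pi * fst (snd X))) =
          Zl \<delta> \<beta> \<sigma>"
      by (intro ext) (simp add: Zl_def power2_eq_square algebra_simps)
  qed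
qed

lemma Y_gen: "(Ys \<nu> \<delta> \<beta> \<sigma>, \<lambda>X. fst (snd X) + 2 * pi * \<nu> * Zl \<delta> \<beta> \<sigma> X) \<in> gen"
proof -
  have A: "(\<lambda>n X. 2 * pi * Zs \<delta> \<beta> \<sigma> n X, \<lambda>X. 2 * pi * Zl \<delta> \<beta> \<sigma> X) \<in> gen"
    by (intro gen.mult gconst Z_gen)
  have B: "(\<lambda>n X. real n * sin (2 * pi * Zs \<delta> \<beta> \<sigma> n X / real n), \<lambda>X. 2 * pi * Zl \<delta> \<beta> \<sigma> X) \<in> gen"
    using gen.comp1[OF trig_smooth A, of 0] by simp
  have L: "(\<lambda>n (X::real \<times> real \<times> real). 1 * fst (snd X), \<lambda>X. 1 * fst (snd X)) \<in> gen"
    by (rule gen.lin[OF bl_fst_snd])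
  have G: "(\<lambda>n X. 1 * fst (snd X) + \<nu> * (real n * sin (2 * pi * Zs \<delta> \<beta> \<sigma> n X / real n)),
            \<lambda>X. 1 * fst (snd X) + \<nu> * (2 * pi * Zl \<delta> \<beta> \<sigma> X)) \<in> gen"
    by (intro gen.add gen.mult L gconst B)
  show ?thesis
    by (rule gen_cong[OF G]) (auto simp: Ys_def fun_eq_iff)
qed

lemma X_gen:
  assumes an: "real_analytic \<psi>" and p0: "\<psi> 0 = 0" and d0: "(\<psi> has_real_derivative 0) (at 0)"
  shows "(Xs \<psi> \<mu> \<delta> \<beta> \<sigma>, \<lambda>X. fst X + 2 * pi * \<mu> * fst (snd X)) \<in> gen"
proof -
  have dd: "deriv \<psi> 0 = 0" using DERIV_imp_deriv[OF d0] .
  have B0: "(\<lambda>n X. real n * (deriv ^^ 0) \<psi> (Zs \<delta> \<beta> \<sigma> n X / real n), \<lambda>X. (deriv ^^ Suc 0) \<psi> 0 * Zl \<delta> \<beta> \<sigma> X) \<in> gen"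
    by (rule gen.comp1[OF psi_smooth[OF an] Z_gen]) (simp add: p0)
  have B: "(\<lambda>n X. real n * \<psi> (Zs \<delta> \<beta> \<sigma> n X / real n), \<lambda>X. 0) \<in> gen"
    using B0 by (simp add: dd)
  have L: "(\<lambda>n (X::real \<times> real \<times> real). 1 * fst X, \<lambda>X. 1 * fst X) \<in> gen"
    by (rule gen.lin[OF bl_fst])
  have G: "(\<lambda>n X. 1 * fst X + \<mu> * (real n * sin (2 * pi * fst (snd X) / real n)) + \<sigma> * (real n * \<psi> (Zs \<delta> \<beta> \<sigma> n X / real n)),
            \<lambda>X. 1 * fst X + \<mu> * (2 * pi * fst (snd X)) + \<sigma> * 0) \<in> gen"
    by (intro gen.add gen.mult L gconst B S2_gen)
  show ?thesis
    by (rule gen_cong[OF G]) (auto simp: Xs_def fun_eq_iff)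
qed



theorem corollary1:
  fixes \<psi> :: "real \<Rightarrow> real" and \<mu> \<nu> \<delta> \<beta> :: real
  assumes analytic: "real_analytic \<psi>"
    and degree_one: "\<And>z. \<psi> (z + 1) = \<psi> z + 1"
    and odd: "\<And>z. \<psi> (- z) - (- z) = - (\<psi> z - z)"
    and psi0: "\<psi> 0 = 0"
    and dpsi0: "(\<psi> has_real_derivative 0) (at 0)"
    and pos: "\<mu> > 0" "\<nu> > 0" "\<delta> > 0"
  shows "\<exists>r>0. \<forall>p::accpt.
           (\<forall>vs. uniform_limit (ball 0 r)
                    (\<lambda>n. iter_dderiv vs (fstar \<psi> \<mu> \<nu> \<delta> \<beta> p n))
                    (iter_dderiv vs (quad_map \<mu> \<nu> \<delta> \<beta> (sigma_pt p))) sequentially)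
         \<and> (\<exists>T. linear T \<and> bij T \<and>
              (\<forall>X. T (quad_map \<mu> \<nu> \<delta> \<beta> (sigma_pt p) X) =
                   michelson (pi * (32 * \<mu>\<^sup>2 * \<nu>\<^sup>2 * \<delta>) powr (1/6))
                             (sigma_pt p * (\<beta> * (2 * \<nu> / (\<delta> * \<mu>\<^sup>2)) powr (1/3))) (T X)))"
proof -
  have psi_per: "\<psi> (real n + s) = real n + \<psi> s" for n s
  proof (induction n)
    case 0
    then show ?case by simp
  next
    case (Suc n)
    have "\<psi> (real (Suc n) + s) = \<psi> ((real n + s) + 1)" by (simp add: algebra_simps)
    also have "\<dots> = \<psi> (real n + s) + 1" by (rule degree_one)
    finally show ?case using Suc by simp
  qed
  have psi_odd: "\<psi> (- t) = - \<psi> t" for t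
    using odd[of t] by simp
  have main: "\<forall>vs. uniform_limit (ball 0 1)
                    (\<lambda>n. iter_dderiv vs (fstar \<psi> \<mu> \<nu> \<delta> \<beta> p n))
                    (iter_dderiv vs (quad_map \<mu> \<nu> \<delta> \<beta> (sigma_pt p))) sequentially" for p
  proof
    fix vs :: "(real \<times> real \<times> real) list"
    define \<sigma> where "\<sigma> = sigma_pt p"
    have Gx: "(Xs \<psi> \<mu> \<delta> \<beta> \<sigma>, \<lambda>X. fst X + 2 * pi * \<mu> * fst (snd X)) \<in> gen"
      by (rule X_gen[OF analytic psi0 dpsi0])
    have Gy: "(Ys \<nu> \<delta> \<beta> \<sigma>, \<lambda>X. fst (snd X) + 2 * pi * \<nu> * Zl \<delta> \<beta> \<sigma> X) \<in> gen"
      by (rule Y_gen)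
    have Gz: "(Zs \<delta> \<beta> \<sigma>, Zl \<delta> \<beta> \<sigma>) \<in> gen"
      by (rule Z_gen)
    have fe: "fstar \<psi> \<mu> \<nu> \<delta> \<beta> p n = (\<lambda>X. (Xs \<psi> \<mu> \<delta> \<beta> \<sigma> n X, Ys \<nu> \<delta> \<beta> \<sigma> n X, Zs \<delta> \<beta> \<sigma> n X))"
      if n: "n \<ge> 1" for n
    proof
      fix X :: "real \<times> real \<times> real"
      obtain \<xi> \<eta> \<zeta> where X: "X = (\<xi>, \<eta>, \<zeta>)" by (cases X) auto
      show "fstar \<psi> \<mu> \<nu> \<delta> \<beta> p n X = (Xs \<psi> \<mu> \<delta> \<beta> \<sigma> n X, Ys \<nu> \<delta> \<beta> \<sigma> n X, Zs \<delta> \<beta> \<sigma> n X)"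
        unfolding X \<sigma>_def by (rule fstar_form[OF psi_per psi_odd n])
    qed
    have qe: "quad_map \<mu> \<nu> \<delta> \<beta> \<sigma> =
        (\<lambda>X. (fst X + 2 * pi * \<mu> * fst (snd X), fst (snd X) + 2 * pi * \<nu> * Zl \<delta> \<beta> \<sigma> X, Zl \<delta> \<beta> \<sigma> X))"
    proof
      fix X :: "real \<times> real \<times> real"
      obtain \<xi> \<eta> \<zeta> where X: "X = (\<xi>, \<eta>, \<zeta>)" by (cases X) auto
      show "quad_map \<mu> \<nu> \<delta> \<beta> \<sigma> X = (fst X + 2 * pi * \<mu> * fst (snd X), fst (snd X) + 2 * pi * \<nu> * Zl \<delta> \<beta> \<sigma> X, Zl \<delta> \<beta> \<sigma> X)"
        unfolding X quad_map_def Zl_def by (simp add: Let_def)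
    qed
    have it1: "iter_dderiv vs (\<lambda>X. (Xs \<psi> \<mu> \<delta> \<beta> \<sigma> n X, Ys \<nu> \<delta> \<beta> \<sigma> n X, Zs \<delta> \<beta> \<sigma> n X)) =
       (\<lambda>X. (iter_dderiv vs (Xs \<psi> \<mu> \<delta> \<beta> \<sigma> n) X, iter_dderiv vs (Ys \<nu> \<delta> \<beta> \<sigma> n) X, iter_dderiv vs (Zs \<delta> \<beta> \<sigma> n) X))" for n
      by (rule iter_triple) (auto intro: gen_all_diff(1)[OF Gx] gen_all_diff(1)[OF Gy] gen_all_diff(1)[OF Gz])
    have it2: "iter_dderiv vs (quad_map \<mu> \<nu> \<delta> \<beta> \<sigma>) =
       (\<lambda>X. (iter_dderiv vs (\<lambda>X. fst X + 2 * pi * \<mu> * fst (snd X)) X,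
             iter_dderiv vs (\<lambda>X. fst (snd X) + 2 * pi * \<nu> * Zl \<delta> \<beta> \<sigma> X) X, iter_dderiv vs (Zl \<delta> \<beta> \<sigma>) X))"
      unfolding qe
      by (rule iter_triple) (auto intro: gen_all_diff(2)[OF Gx] gen_all_diff(2)[OF Gy] gen_all_diff(2)[OF Gz])
    have U: "bounded (ball (0::real \<times> real \<times> real) 1)" by simp
    have ul: "uniform_limit (ball 0 1)
       (\<lambda>n X. (iter_dderiv vs (Xs \<psi> \<mu> \<delta> \<beta> \<sigma> n) X, iter_dderiv vs (Ys \<nu> \<delta> \<beta> \<sigma> n) X, iter_dderiv vs (Zs \<delta> \<beta> \<sigma> n) X))
       (\<lambda>X. (iter_dderiv vs (\<lambda>X. fst X + 2 * pi * \<mu> * fst (snd X)) X,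
             iter_dderiv vs (\<lambda>X. fst (snd X) + 2 * pi * \<nu> * Zl \<delta> \<beta> \<sigma> X) X, iter_dderiv vs (Zl \<delta> \<beta> \<sigma>) X))
       sequentially"
      by (rule unif_triple[OF conjunct1[OF gen_unif[OF U gen_iter[OF Gx]]]
                               conjunct1[OF gen_unif[OF U gen_iter[OF Gy]]]
                               conjunct1[OF gen_unif[OF U gen_iter[OF Gz]]]])
    show "uniform_limit (ball 0 1) (\<lambda>n. iter_dderiv vs (fstar \<psi> \<mu> \<nu> \<delta> \<beta> p n))
            (iter_dderiv vs (quad_map \<mu> \<nu> \<delta> \<beta> (sigma_pt p))) sequentially"
    proof (rule uniform_limit_cong[THEN iffD1, OF _ _ ul])
      show "\<forall>\<^sub>F n in sequentially. \<forall>x\<in>ball 0 1.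
          (iter_dderiv vs (Xs \<psi> \<mu> \<delta> \<beta> \<sigma> n) x, iter_dderiv vs (Ys \<nu> \<delta> \<beta> \<sigma> n) x, iter_dderiv vs (Zs \<delta> \<beta> \<sigma> n) x) =
          iter_dderiv vs (fstar \<psi> \<mu> \<nu> \<delta> \<beta> p n) x"
        using eventually_ge_at_top[of "1::nat"]
        by eventually_elim (simp add: fe it1)
      show "\<And>x. x \<in> ball 0 1 \<Longrightarrow>
          (iter_dderiv vs (\<lambda>X. fst X + 2 * pi * \<mu> * fst (snd X)) x,
             iter_dderiv vs (\<lambda>X. fst (snd X) + 2 * pi * \<nu> * Zl \<delta> \<beta> \<sigma> X) x, iter_dderiv vs (Zl \<delta> \<beta> \<sigma>) x) =
          iter_dderiv vs (quad_map \<mu> \<nu> \<delta> \<beta> (sigma_pt p)) x"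
        unfolding \<sigma>_def[symmetric] it2 by simp
    qed
  qed
  show ?thesis
    using main conj_quad[OF pos] by (intro exI[of _ 1]) auto
qed


end
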